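(* Let $G$ be a heap and let $G^1=\langle V^1,s^1_1,s^1_2,\mathsf{null},\mathsf{root}\rangle$ and $G^2=\langle V^2,s^2_1,s^2_2,\mathsf{null},\mathsf{root}\rangle$ be orable graphs with $V^1\cap V^2=\{\mathsf{null},\mathsf{root}\}$. Then $G\to G^1+G^2$ if and only if $G\to G^1$ or $G\to G^2$.
   Context: A graph is a tuple $\langle V,s_1,s_2,\mathsf{null},\mathsf{root}\rangle$ with $V$ finite, $\mathsf{root}\neq\mathsf{null}$ in $V$, $s_1,s_2\subseteq V\times V$, and $\langle\mathsf{null},x\rangle\in s_i$ iff $x=\mathsf{null}$. A heap is a graph in which $s_1,s_2$ are total functions and every node other than $\mathsf{null}$ is reachable from $\mathsf{root}$ along $s_1\cup s_2$. A homomorphism $h:G\to G'$ is a map on nodes preserving $s_1$- and $s_2$-edges with $h(x)=\mathsf{root}'$ iff $x=\mathsf{root}$ and $h(x)=\mathsf{null}'$ iff $x=\mathsf{null}$; $G\to G'$ means one exists. A graph is orable if for all nodes $x$: $\langle\mathsf{root},x\rangle\in s_2$ iff $x=\mathsf{null}$. For orable $G^1,G^2$ sharing $\mathsf{null},\mathsf{root}$ with $V^1\cap V^2=\{\mathsf{null},\mathsf{root}\}$, the sum $G^1+G^2=\langle V^1\cup V^2,\ s^1_1\cup s^2_1,\ s^1_2\cup s^2_2,\ \mathsf{null},\mathsf{root}\rangle$. *)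

theory Defs
  imports Main
begin

record 'a graph =
  V :: "'a set"
  s1 :: "('a \<times> 'a) set"
  s2 :: "('a \<times> 'a) set"
  null :: 'a
  root :: 'a

definition is_graph :: "'a graph \<Rightarrow> bool" where
  "is_graph G \<longleftrightarrow> finite (V G) \<and> root G \<in> V G \<and> null G \<in> V G \<and> root G \<noteq> null G
     \<and> s1 G \<subseteq> V G \<times> V G \<and> s2 G \<subseteq> V G \<times> V G
     \<and> (\<forall>x. (null G, x) \<in> s1 G \<longleftrightarrow> x = null G)
     \<and> (\<forall>x. (null G, x) \<in> s2 G \<longleftrightarrow> x = null G)"

definition total_fun_on :: "'a set \<Rightarrow> ('a \<times> 'a) set \<Rightarrow> bool" where
  "total_fun_on A s \<longleftrightarrow> (\<forall>x\<in>A. \<exists>!y. (x, y) \<in> s)"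

definition is_heap :: "'a graph \<Rightarrow> bool" where
  "is_heap G \<longleftrightarrow> is_graph G \<and> total_fun_on (V G) (s1 G) \<and> total_fun_on (V G) (s2 G)
     \<and> (\<forall>x \<in> V G - {null G}. (root G, x) \<in> (s1 G \<union> s2 G)\<^sup>*)"

definition is_hom :: "('a \<Rightarrow> 'b) \<Rightarrow> 'a graph \<Rightarrow> 'b graph \<Rightarrow> bool" where
  "is_hom h G G' \<longleftrightarrow> (\<forall>x\<in>V G. h x \<in> V G')
     \<and> (\<forall>(x, y)\<in>s1 G. (h x, h y) \<in> s1 G')
     \<and> (\<forall>(x, y)\<in>s2 G. (h x, h y) \<in> s2 G')
     \<and> (\<forall>x\<in>V G. h x = root G' \<longleftrightarrow> x = root G)
     \<and> (\<forall>x\<in>V G. h x = null G' \<longleftrightarrow> x = null G)"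

definition hom_exists :: "'a graph \<Rightarrow> 'b graph \<Rightarrow> bool" (infix "\<rightarrow>\<^sub>h" 50) where
  "G \<rightarrow>\<^sub>h G' \<longleftrightarrow> (\<exists>h. is_hom h G G')"

definition orable :: "'a graph \<Rightarrow> bool" where
  "orable G \<longleftrightarrow> (\<forall>x. (root G, x) \<in> s2 G \<longleftrightarrow> x = null G)"

definition graph_sum :: "'a graph \<Rightarrow> 'a graph \<Rightarrow> 'a graph" (infixl "+\<^sub>g" 65) where
  "G1 +\<^sub>g G2 = \<lparr>V = V G1 \<union> V G2, s1 = s1 G1 \<union> s1 G2, s2 = s2 G1 \<union> s2 G2,
                null = null G1, root = root G1\<rparr>"

end

theory Submission
  imports Defs
begin

lemma side_lemma:
  fixes G :: "'a graph" and Ga Gb :: "'b graph" and h :: "'a \<Rightarrow> 'b"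
  assumes heap: "is_heap G"
    and ga: "is_graph Ga" and gb: "is_graph Gb"
    and oa: "orable Ga" and ob: "orable Gb"
    and nn: "null Ga = null Gb" and rr: "root Ga = root Gb"
    and int: "V Ga \<inter> V Gb = {null Ga, root Ga}"
    and hV: "\<forall>x\<in>V G. h x \<in> V Ga \<union> V Gb"
    and h1: "\<forall>(x, y)\<in>s1 G. (h x, h y) \<in> s1 Ga \<union> s1 Gb"
    and h2: "\<forall>(x, y)\<in>s2 G. (h x, h y) \<in> s2 Ga \<union> s2 Gb"
    and hr: "\<forall>x\<in>V G. h x = root Ga \<longleftrightarrow> x = root G"
    and hn: "\<forall>x\<in>V G. h x = null Ga \<longleftrightarrow> x = null G"
    and z1: "(root G, z) \<in> s1 G" and z2: "(root Ga, h z) \<in> s1 Ga"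
  shows "is_hom h G Ga"
proof -
  have gG: "is_graph G" and t1: "total_fun_on (V G) (s1 G)" and t2: "total_fun_on (V G) (s2 G)"
    and reachG: "\<forall>x \<in> V G - {null G}. (root G, x) \<in> (s1 G \<union> s2 G)\<^sup>*"
    using heap unfolding is_heap_def by auto
  have Gs1: "s1 G \<subseteq> V G \<times> V G" and Gs2: "s2 G \<subseteq> V G \<times> V G" and rG: "root G \<in> V G"
    and nG: "null G \<in> V G"
    and Gn1: "\<And>x. (null G, x) \<in> s1 G \<longleftrightarrow> x = null G"
    and Gn2: "\<And>x. (null G, x) \<in> s2 G \<longleftrightarrow> x = null G"
    using gG unfolding is_graph_def by auto
  have as1: "s1 Ga \<subseteq> V Ga \<times> V Ga" and as2: "s2 Ga \<subseteq> V Ga \<times> V Ga"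
    and an1: "(null Ga, null Ga) \<in> s1 Ga" and an2: "(null Ga, null Ga) \<in> s2 Ga"
    and anV: "null Ga \<in> V Ga"
    using ga unfolding is_graph_def by auto
  have bs1: "s1 Gb \<subseteq> V Gb \<times> V Gb" and bs2: "s2 Gb \<subseteq> V Gb \<times> V Gb"
    using gb unfolding is_graph_def by auto
  have key1: "(h x, h y) \<in> s1 Ga" if "h x \<in> V Ga" "h x \<noteq> null Ga" "h x \<noteq> root Ga" "(x, y) \<in> s1 G" for x y
  proof -
    have "(h x, h y) \<in> s1 Ga \<union> s1 Gb" using h1 that(4) by auto
    moreover have "(h x, h y) \<notin> s1 Gb"
    proof
      assume "(h x, h y) \<in> s1 Gb"
      then have "h x \<in> V Gb" using bs1 by auto
      then show False using int that by auto
    qed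
    ultimately show ?thesis by auto
  qed
  have key2: "(h x, h y) \<in> s2 Ga" if "h x \<in> V Ga" "h x \<noteq> null Ga" "h x \<noteq> root Ga" "(x, y) \<in> s2 G" for x y
  proof -
    have "(h x, h y) \<in> s2 Ga \<union> s2 Gb" using h2 that(4) by auto
    moreover have "(h x, h y) \<notin> s2 Gb"
    proof
      assume "(h x, h y) \<in> s2 Gb"
      then have "h x \<in> V Gb" using bs2 by auto
      then show False using int that by auto
    qed
    ultimately show ?thesis by auto
  qed
  have hroot: "h (root G) = root Ga" using hr rG by auto
  have hnull: "h (null G) = null Ga" using hn nG by auto
  have rs2: "y = null G" if "(root G, y) \<in> s2 G" for y
  proof -
    have "(root Ga, h y) \<in> s2 Ga \<union> s2 Gb" using h2 that hroot by auto
    then have "h y = null Ga" using oa ob nn rr unfolding orable_def by auto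
    moreover have "y \<in> V G" using that Gs2 by auto
    ultimately show ?thesis using hn by auto
  qed
  have rs1: "y = z" if "(root G, y) \<in> s1 G" for y
    using t1 rG that z1 unfolding total_fun_on_def by blast
  have hzV: "h z \<in> V Ga" using z2 as1 by auto
  have stp: "h y \<in> V Ga" if "h x \<in> V Ga" "x \<in> V G" "(x, y) \<in> s1 G \<union> s2 G" for x y
  proof (cases "x = null G")
    case True
    then have "y = null G" using that(3) Gn1 Gn2 by auto
    then show ?thesis using hnull anV by simp
  next
    case xn: False
    show ?thesis
    proof (cases "x = root G")
      case True
      then show ?thesis using that(3) rs1 rs2 hzV hnull anV by auto
    next
      case False
      then have "h x \<noteq> null Ga" "h x \<noteq> root Ga" using hn hr that(2) xn by auto
      then show ?thesis using key1 key2 that as1 as2 by blast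
    qed
  qed
  have reach: "h x \<in> V Ga" if "(root G, x) \<in> (s1 G \<union> s2 G)\<^sup>*" for x
    using that
  proof (induction rule: rtrancl_induct)
    case base
    then show ?case using hroot ga unfolding is_graph_def by auto
  next
    case (step y w)
    have "y \<in> V G"
      using step.hyps(1) rG Gs1 Gs2 by (induction rule: rtrancl_induct) auto
    then show ?case using stp[OF step.IH] step.hyps(2) \<open>y \<in> V G\<close> by blast
  qed
  have allV: "h x \<in> V Ga" if "x \<in> V G" for x
    using that reachG reach hnull anV by (cases "x = null G") auto
  have e1: "(h x, h y) \<in> s1 Ga" if "(x, y) \<in> s1 G" for x y
  proof -
    have xV: "x \<in> V G" using that Gs1 by auto
    show ?thesis
    proof (cases "x = null G")
      case True then show ?thesis using that Gn1 hnull an1 by auto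
    next
      case xn: False
      show ?thesis
      proof (cases "x = root G")
        case True then show ?thesis using that rs1 hroot z2 by auto
      next
        case False
        then have "h x \<noteq> null Ga" "h x \<noteq> root Ga" using hn hr xV xn by auto
        then show ?thesis using key1 that allV xV by blast
      qed
    qed
  qed
  have e2: "(h x, h y) \<in> s2 Ga" if "(x, y) \<in> s2 G" for x y
  proof -
    have xV: "x \<in> V G" using that Gs2 by auto
    show ?thesis
    proof (cases "x = null G")
      case True then show ?thesis using that Gn2 hnull an2 by auto
    next
      case xn: False
      show ?thesis
      proof (cases "x = root G")
        case True
        then have "y = null G" using that rs2 by auto
        then show ?thesis using True hroot hnull oa unfolding orable_def by auto
      next
        case False
        then have "h x \<noteq> null Ga" "h x \<noteq> root Ga" using hn hr xV xn by auto
        then show ?thesis using key2 that allV xV by blast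
      qed
    qed
  qed
  show ?thesis unfolding is_hom_def using allV e1 e2 hr hn by auto
qed

theorem proposition30:
  fixes G :: "'a graph" and G1 G2 :: "'b graph"
  assumes "is_heap G"
    and "is_graph G1" and "is_graph G2"
    and "orable G1" and "orable G2"
    and "null G1 = null G2" and "root G1 = root G2"
    and "V G1 \<inter> V G2 = {null G1, root G1}"
  shows "G \<rightarrow>\<^sub>h G1 +\<^sub>g G2 \<longleftrightarrow> G \<rightarrow>\<^sub>h G1 \<or> G \<rightarrow>\<^sub>h G2"
proof
  assume "G \<rightarrow>\<^sub>h G1 +\<^sub>g G2"
  then obtain h where h: "is_hom h G (G1 +\<^sub>g G2)" unfolding hom_exists_def by auto
  have hV: "\<forall>x\<in>V G. h x \<in> V G1 \<union> V G2"
    and h1: "\<forall>(x, y)\<in>s1 G. (h x, h y) \<in> s1 G1 \<union> s1 G2"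
    and h2: "\<forall>(x, y)\<in>s2 G. (h x, h y) \<in> s2 G1 \<union> s2 G2"
    and hr: "\<forall>x\<in>V G. h x = root G1 \<longleftrightarrow> x = root G"
    and hn: "\<forall>x\<in>V G. h x = null G1 \<longleftrightarrow> x = null G"
    using h unfolding is_hom_def graph_sum_def by auto
  have rG: "root G \<in> V G" and tf: "total_fun_on (V G) (s1 G)"
    using assms(1) unfolding is_heap_def is_graph_def by auto
  then obtain z where z1: "(root G, z) \<in> s1 G" unfolding total_fun_on_def by blast
  have hroot: "h (root G) = root G1" using hr rG by auto
  have "(root G1, h z) \<in> s1 G1 \<union> s1 G2" using h1 z1 hroot by auto
  then show "G \<rightarrow>\<^sub>h G1 \<or> G \<rightarrow>\<^sub>h G2"
  proof
    assume "(root G1, h z) \<in> s1 G1"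
    then have "is_hom h G G1"
      using side_lemma[of G G1 G2 h z] assms hV h1 h2 hr hn z1 by auto
    then show ?thesis unfolding hom_exists_def by auto
  next
    assume "(root G1, h z) \<in> s1 G2"
    moreover have "V G2 \<inter> V G1 = {null G2, root G2}" using assms by auto
    moreover have "\<forall>x\<in>V G. h x \<in> V G2 \<union> V G1" using hV by auto
    moreover have "\<forall>(x, y)\<in>s1 G. (h x, h y) \<in> s1 G2 \<union> s1 G1" using h1 by auto
    moreover have "\<forall>(x, y)\<in>s2 G. (h x, h y) \<in> s2 G2 \<union> s2 G1" using h2 by auto
    ultimately have "is_hom h G G2"
      using side_lemma[of G G2 G1 h z] assms hr hn z1 by auto
    then show ?thesis unfolding hom_exists_def by auto
  qed
next
  assume "G \<rightarrow>\<^sub>h G1 \<or> G \<rightarrow>\<^sub>h G2"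
  then show "G \<rightarrow>\<^sub>h G1 +\<^sub>g G2"
  proof
    assume "G \<rightarrow>\<^sub>h G1"
    then obtain h where "is_hom h G G1" unfolding hom_exists_def by auto
    then have "is_hom h G (G1 +\<^sub>g G2)" unfolding is_hom_def graph_sum_def by auto
    then show ?thesis unfolding hom_exists_def by auto
  next
    assume "G \<rightarrow>\<^sub>h G2"
    then obtain h where "is_hom h G G2" unfolding hom_exists_def by auto
    then have "is_hom h G (G1 +\<^sub>g G2)" using assms(6,7) unfolding is_hom_def graph_sum_def by auto
    then show ?thesis unfolding hom_exists_def by auto
  qed
qed

end
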